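(* Let $E$ be a Banach lattice, $P: E \to \mathbb{R}$ a regular polynomial, and $(x_m)$ a disjoint, almost limited, weakly null sequence in $E$. Then $\lim_m P(x_m) = 0$.
   Context: A $k$-homogeneous continuous polynomial $P: E \to \mathbb{R}$ is positive if its associated symmetric $k$-linear form $A$ satisfies $A(x_1,\dots,x_k) \ge 0$ whenever all $x_i \ge 0$; a polynomial is a finite sum of homogeneous continuous polynomials, and it is regular if it is a difference of two positive polynomials (sums of positive homogeneous polynomials). A bounded set $B \subset E$ (here $\{x_m\}$) is almost limited if every disjoint weak* null sequence $(x_n')$ in $E'$ converges uniformly to zero on $B$. *)

theory Defs
  imports "HOL-Analysis.Analysis"
begin

class banach_lattice = banach + lattice +
  assumes bl_add_mono: "x \<le> y \<Longrightarrow> x + z \<le> y + z"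
    and bl_scaleR_nonneg: "0 \<le> x \<Longrightarrow> 0 \<le> c \<Longrightarrow> 0 \<le> c *\<^sub>R x"
    and bl_norm_mono: "sup x (- x) \<le> sup y (- y) \<Longrightarrow> norm x \<le> norm y"

definition lat_abs :: "'a::banach_lattice \<Rightarrow> 'a" where
  "lat_abs x = sup x (- x)"

definition disjoint_seq :: "(nat \<Rightarrow> 'a::banach_lattice) \<Rightarrow> bool" where
  "disjoint_seq x \<longleftrightarrow> (\<forall>n m. n \<noteq> m \<longrightarrow> inf (lat_abs (x n)) (lat_abs (x m)) = 0)"

text \<open>Elements of E' are bounded linear functionals. Modulus in E' (Riesz--Kantorovich):
  |f|(x) = sup { f y : |y| \<le> x } for x \<ge> 0.\<close>
definition dual_abs :: "('a::banach_lattice \<Rightarrow> real) \<Rightarrow> 'a \<Rightarrow> real" where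
  "dual_abs f x = (SUP y\<in>{y. lat_abs y \<le> x}. f y)"

text \<open>Infimum in E' (Riesz--Kantorovich): (f \<and> g)(x) = inf { f y + g (x - y) : 0 \<le> y \<le> x }
  for x \<ge> 0.  Two functionals f, g are disjoint iff |f| \<and> |g| = 0, i.e. vanishes on the
  positive cone.\<close>
definition dual_disjoint :: "('a::banach_lattice \<Rightarrow> real) \<Rightarrow> ('a \<Rightarrow> real) \<Rightarrow> bool" where
  "dual_disjoint f g \<longleftrightarrow>
     (\<forall>x. 0 \<le> x \<longrightarrow> (INF y\<in>{y. 0 \<le> y \<and> y \<le> x}. dual_abs f y + dual_abs g (x - y)) = 0)"

definition dual_disjoint_seq :: "(nat \<Rightarrow> 'a::banach_lattice \<Rightarrow> real) \<Rightarrow> bool" where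
  "dual_disjoint_seq f \<longleftrightarrow> (\<forall>n m. n \<noteq> m \<longrightarrow> dual_disjoint (f n) (f m))"

definition weak_star_null :: "(nat \<Rightarrow> 'a::real_normed_vector \<Rightarrow> real) \<Rightarrow> bool" where
  "weak_star_null f \<longleftrightarrow> (\<forall>x. (\<lambda>n. f n x) \<longlonglongrightarrow> 0)"

definition weakly_null :: "(nat \<Rightarrow> 'a::real_normed_vector) \<Rightarrow> bool" where
  "weakly_null x \<longleftrightarrow> (\<forall>f :: 'a \<Rightarrow> real. bounded_linear f \<longrightarrow> (\<lambda>m. f (x m)) \<longlonglongrightarrow> 0)"

definition almost_limited :: "'a::banach_lattice set \<Rightarrow> bool" where
  "almost_limited B \<longleftrightarrow> bounded B \<and>
     (\<forall>f :: nat \<Rightarrow> 'a \<Rightarrow> real. (\<forall>n. bounded_linear (f n)) \<longrightarrow> dual_disjoint_seq f \<longrightarrow>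
        weak_star_null f \<longrightarrow> (\<forall>e>0. \<forall>\<^sub>F n in sequentially. \<forall>b\<in>B. \<bar>f n b\<bar> < e))"

definition sym_kform :: "nat \<Rightarrow> ('a::real_normed_vector list \<Rightarrow> real) \<Rightarrow> bool" where
  "sym_kform k A \<longleftrightarrow>
     (\<forall>xs i. length xs = k \<longrightarrow> i < k \<longrightarrow> linear (\<lambda>y. A (xs[i := y]))) \<and>
     (\<exists>C. \<forall>xs. length xs = k \<longrightarrow> \<bar>A xs\<bar> \<le> C * prod_list (map norm xs)) \<and>
     (\<forall>xs ys. length xs = k \<longrightarrow> mset ys = mset xs \<longrightarrow> A ys = A xs)"

definition positive_kform :: "nat \<Rightarrow> ('a::banach_lattice list \<Rightarrow> real) \<Rightarrow> bool" where
  "positive_kform k A \<longleftrightarrow> sym_kform k A \<and>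
     (\<forall>xs. length xs = k \<longrightarrow> (\<forall>x\<in>set xs. 0 \<le> x) \<longrightarrow> 0 \<le> A xs)"

definition positive_hom_poly :: "('a::banach_lattice \<Rightarrow> real) \<Rightarrow> bool" where
  "positive_hom_poly P \<longleftrightarrow>
     (\<exists>k A. 1 \<le> k \<and> positive_kform k A \<and> (\<forall>x. P x = A (replicate k x)))"

definition positive_poly :: "('a::banach_lattice \<Rightarrow> real) \<Rightarrow> bool" where
  "positive_poly P \<longleftrightarrow>
     (\<exists>Ps. (\<forall>Q\<in>set Ps. positive_hom_poly Q) \<and> (\<forall>x. P x = (\<Sum>Q\<leftarrow>Ps. Q x)))"

definition regular_poly :: "('a::banach_lattice \<Rightarrow> real) \<Rightarrow> bool" where
  "regular_poly P \<longleftrightarrow>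
     (\<exists>P1 P2. positive_poly P1 \<and> positive_poly P2 \<and> (\<forall>x. P x = P1 x - P2 x))"

end

theory Submission
  imports Defs "HOL-Library.Lattice_Algebras"
begin

context banach_lattice begin
subclass lattice_ab_group_add
proof
  fix a b c :: 'a assume "a \<le> b" then show "c + a \<le> c + b"
    using bl_add_mono[of a b c] by (simp add: add.commute)
qed
end

lemma scaleR_mono_bl:
  fixes x y :: "'a::banach_lattice"
  assumes "x \<le> y" "0 \<le> c" shows "c *\<^sub>R x \<le> c *\<^sub>R y"
proof -
  have "0 \<le> y - x" using assms by simp
  then have "0 \<le> c *\<^sub>R (y - x)" using bl_scaleR_nonneg assms by blast
  then show ?thesis by (simp add: scaleR_diff_right)
qed

lemma scaleR_inf_bl:
  fixes a b :: "'a::banach_lattice"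
  assumes "0 \<le> c" shows "c *\<^sub>R inf a b = inf (c *\<^sub>R a) (c *\<^sub>R b)"
proof (cases "c = 0")
  case True then show ?thesis by simp
next
  case False
  then have c: "0 < c" using assms by simp
  have le1: "c *\<^sub>R inf a b \<le> inf (c *\<^sub>R a) (c *\<^sub>R b)"
    using scaleR_mono_bl[OF inf_le1 assms, of a b] scaleR_mono_bl[OF inf_le2 assms, of a b] by (rule le_infI)
  have "(1/c) *\<^sub>R inf (c *\<^sub>R a) (c *\<^sub>R b) \<le> inf a b"
  proof (rule le_infI)
    show "(1/c) *\<^sub>R inf (c *\<^sub>R a) (c *\<^sub>R b) \<le> a"
      using scaleR_mono_bl[of "inf (c *\<^sub>R a) (c *\<^sub>R b)" "c *\<^sub>R a" "1/c"] c by simp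
    show "(1/c) *\<^sub>R inf (c *\<^sub>R a) (c *\<^sub>R b) \<le> b"
      using scaleR_mono_bl[of "inf (c *\<^sub>R a) (c *\<^sub>R b)" "c *\<^sub>R b" "1/c"] c by simp
  qed
  then have "c *\<^sub>R ((1/c) *\<^sub>R inf (c *\<^sub>R a) (c *\<^sub>R b)) \<le> c *\<^sub>R inf a b"
    using scaleR_mono_bl assms by blast
  then have "inf (c *\<^sub>R a) (c *\<^sub>R b) \<le> c *\<^sub>R inf a b" using c by simp
  with le1 show ?thesis by (rule antisym)
qed

lemma pos_part_nonneg: "0 \<le> pprt (x::'a::banach_lattice)" by simp
lemma neg_part_nonneg: "0 \<le> - nprt (x::'a::banach_lattice)" by simp
lemma prts_diff: "(x::'a::banach_lattice) = pprt x - (- nprt x)"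
  using prts[of x] by simp

lemma lat_abs_prts: "lat_abs (a::'a::banach_lattice) = pprt a - nprt a"
proof -
  have a: "a \<le> sup a (- a)" and b: "- a \<le> sup a (- a)" by auto
  have "0 \<le> sup a (- a)" using add_mono [OF a b] by simp
  then have "sup (sup a (- a)) 0 = sup a (- a)"
    by (rule sup_absorb1)
  then show ?thesis
    by (simp add: lat_abs_def add_sup_inf_distribs ac_simps pprt_def nprt_def)
qed

lemma lat_abs_nonneg: "0 \<le> lat_abs (a::'a::banach_lattice)"
proof -
  have a: "a \<le> sup a (- a)" and b: "- a \<le> sup a (- a)" by auto
  show ?thesis using add_mono [OF a b] by (simp add: lat_abs_def)
qed

lemma lat_abs_id: "0 \<le> (a::'a::banach_lattice) \<Longrightarrow> lat_abs a = a"
  by (simp add: lat_abs_prts)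

lemma lat_abs_abs: "lat_abs (lat_abs (a::'a::banach_lattice)) = lat_abs a"
  by (simp add: lat_abs_id lat_abs_nonneg)

lemma norm_lat_abs: "norm (lat_abs (a::'a::banach_lattice)) = norm a"
proof -
  have e: "sup (lat_abs a) (- lat_abs a) = lat_abs a" using lat_abs_abs[of a] by (simp add: lat_abs_def)
  have "norm (lat_abs a) \<le> norm a" by (rule bl_norm_mono) (simp only: e, simp add: lat_abs_def)
  moreover have "norm a \<le> norm (lat_abs a)" by (rule bl_norm_mono) (simp only: e, simp add: lat_abs_def)
  ultimately show ?thesis by simp
qed

lemma scaleR_left_mono_bl:
  fixes a :: "'a::banach_lattice"
  assumes "0 \<le> a" "s \<le> m" shows "s *\<^sub>R a \<le> m *\<^sub>R a"
proof -
  have "0 \<le> (m - s) *\<^sub>R a" using assms bl_scaleR_nonneg[of a "m - s"] by simp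
  then show ?thesis by (simp add: scaleR_left_diff_distrib)
qed

lemma norm_mono_pos: "0 \<le> (a::'a::banach_lattice) \<Longrightarrow> a \<le> b \<Longrightarrow> norm a \<le> norm b"
  using bl_norm_mono[of a b] lat_abs_id[of a] lat_abs_id[of b]
  unfolding lat_abs_def by auto

lemma pprt_le_abs: "pprt (a::'a::banach_lattice) \<le> lat_abs a"
  by (simp add: lat_abs_prts)
lemma nprt_le_abs: "- nprt (a::'a::banach_lattice) \<le> lat_abs a"
  by (simp add: lat_abs_prts)

lemma prts_disj: "inf (pprt (a::'a::banach_lattice)) (- nprt a) = 0"
proof -
  have e: "pprt a + (- nprt a) = sup (pprt a) (- nprt a) + inf (pprt a) (- nprt a)"
    by (rule add_eq_inf_sup)
  have "sup (pprt a) (- nprt a) = sup (sup a 0) (sup (-a) 0)"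
    by (simp add: pprt_def nprt_def neg_inf_eq_sup)
  also have "\<dots> = sup (sup a (-a)) 0" by (simp add: ac_simps)
  also have "\<dots> = lat_abs a" using lat_abs_nonneg[of a]
    by (simp add: lat_abs_def sup_absorb1)
  finally have "sup (pprt a) (- nprt a) = pprt a + (- nprt a)"
    by (simp add: lat_abs_prts)
  with e show ?thesis by simp
qed

lemma riesz_ineq:
  fixes a b c :: "'a::banach_lattice"
  assumes "0 \<le> a" "0 \<le> b" "0 \<le> c"
  shows "inf (a + b) c \<le> inf a c + inf b c"
proof -
  define d where "d = inf (a + b) c"
  have "d - inf b c = sup (d - b) (d - c)" by (simp add: diff_inf_eq_sup add_sup_distrib_left)
  also have "\<dots> \<le> a"
  proof (rule sup_least)
    show "d - b \<le> a" unfolding d_def by (simp add: algebra_simps le_infI1)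
    have "d - c \<le> 0" unfolding d_def by simp
    then show "d - c \<le> a" using assms(1) by (rule order_trans)
  qed
  finally have 1: "d - inf b c \<le> a" .
  have "0 \<le> inf b c" using assms by simp
  then have "d - inf b c \<le> d" by simp
  also have "d \<le> c" unfolding d_def by simp
  finally have 2: "d - inf b c \<le> c" .
  have "d - inf b c \<le> inf a c" using 1 2 by (rule le_infI)
  then have "d \<le> inf a c + inf b c" by (simp only: diff_le_eq)
  then show ?thesis unfolding d_def .
qed

lemma inf_zero_mono:
  fixes a b a' b' :: "'a::banach_lattice"
  assumes "0 \<le> a'" "a' \<le> a" "0 \<le> b'" "b' \<le> b" "inf a b = 0"
  shows "inf a' b' = 0"
proof -
  have "inf a' b' \<le> inf a b" using assms by (meson inf_mono)
  moreover have "0 \<le> inf a' b'" using assms by simp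
  ultimately show ?thesis using assms(5) by simp
qed

lemma inf_zero_scale:
  fixes a b :: "'a::banach_lattice"
  assumes "0 \<le> a" "0 \<le> b" "inf a b = 0" "0 \<le> s" "0 \<le> t"
  shows "inf (s *\<^sub>R a) (t *\<^sub>R b) = 0"
proof -
  define m where "m = max s t"
  have m: "0 \<le> m" "s \<le> m" "t \<le> m" using assms unfolding m_def by auto
  have z: "inf (m *\<^sub>R a) (m *\<^sub>R b) = 0" using scaleR_inf_bl[OF m(1), of a b] assms by simp
  have p1: "0 \<le> s *\<^sub>R a" using assms bl_scaleR_nonneg by blast
  have p2: "0 \<le> t *\<^sub>R b" using assms bl_scaleR_nonneg by blast
  have l1: "s *\<^sub>R a \<le> m *\<^sub>R a" using m assms by (intro scaleR_left_mono_bl) auto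
  have l2: "t *\<^sub>R b \<le> m *\<^sub>R b" using m assms by (intro scaleR_left_mono_bl) auto
  show ?thesis by (rule inf_zero_mono[OF p1 l1 p2 l2 z])
qed


lemma bl_diff: "bounded_linear f \<Longrightarrow> f (x - y) = f x - f y" by (simp add: linear_diff bounded_linear.linear)
lemma bl_add: "bounded_linear f \<Longrightarrow> f (x + y) = f x + f y" by (simp add: linear_add bounded_linear.linear)
lemma bl_scale: "bounded_linear f \<Longrightarrow> f (c *\<^sub>R x) = c *\<^sub>R f x" by (simp add: linear_scale bounded_linear.linear)
lemma bl_zero: "bounded_linear f \<Longrightarrow> f 0 = 0" by (simp add: linear_0 bounded_linear.linear)
lemma bl_neg: "bounded_linear f \<Longrightarrow> f (- x) = - f x" by (simp add: linear_neg bounded_linear.linear)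

definition posf :: "('a::banach_lattice \<Rightarrow> real) \<Rightarrow> bool" where
  "posf h \<longleftrightarrow> bounded_linear h \<and> (\<forall>y. 0 \<le> y \<longrightarrow> 0 \<le> h y)"

definition Lp :: "('a::banach_lattice \<Rightarrow> real) \<Rightarrow> 'a \<Rightarrow> 'a \<Rightarrow> real" where
  "Lp h v y = (SUP s\<in>{0::real..}. h (inf y (s *\<^sub>R v)))"

definition BP :: "('a::banach_lattice \<Rightarrow> real) \<Rightarrow> 'a \<Rightarrow> 'a \<Rightarrow> real" where
  "BP h v y = Lp h v (pprt y) - Lp h v (- nprt y)"

lemma posf_bl: "posf h \<Longrightarrow> bounded_linear h" by (simp add: posf_def)
lemma posf_nonneg: "posf h \<Longrightarrow> 0 \<le> y \<Longrightarrow> 0 \<le> h y" by (simp add: posf_def)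

lemma posf_mono:
  assumes "posf h" "a \<le> b" shows "h a \<le> h b"
proof -
  have "0 \<le> b - a" using assms(2) by simp
  then have "0 \<le> h (b - a)" by (rule posf_nonneg[OF assms(1)])
  then show ?thesis using bl_diff[OF posf_bl[OF assms(1)]] by simp
qed

lemma inf_scale_mono:
  fixes y v :: "'a::banach_lattice"
  assumes "0 \<le> v" "s \<le> t" shows "inf y (s *\<^sub>R v) \<le> inf y (t *\<^sub>R v)"
  using scaleR_left_mono_bl[OF assms] by (simp add: le_infI2)

lemma inf_scale_nonneg:
  fixes y v :: "'a::banach_lattice"
  assumes "0 \<le> v" "0 \<le> y" "0 \<le> s" shows "0 \<le> inf y (s *\<^sub>R v)"
  using assms bl_scaleR_nonneg[OF assms(1) assms(3)] by simp

context
  fixes h :: "'a::banach_lattice \<Rightarrow> real" and v :: 'a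
  assumes h: "posf h" and v: "0 \<le> v"
begin

lemma Lp_bdd: "0 \<le> y \<Longrightarrow> bdd_above ((\<lambda>s. h (inf y (s *\<^sub>R v))) ` {0..})"
  by (rule bdd_aboveI[where M = "h y"]) (auto intro: posf_mono[OF h])

lemma Lp_le: "0 \<le> y \<Longrightarrow> Lp h v y \<le> h y"
  unfolding Lp_def by (rule cSUP_least) (auto intro: posf_mono[OF h])

lemma Lp_ge: "0 \<le> y \<Longrightarrow> 0 \<le> s \<Longrightarrow> h (inf y (s *\<^sub>R v)) \<le> Lp h v y"
  unfolding Lp_def by (rule cSUP_upper) (auto intro: Lp_bdd)

lemma Lp_nonneg: "0 \<le> y \<Longrightarrow> 0 \<le> Lp h v y"
  using Lp_ge[of y 0] posf_nonneg[OF h, of "inf y 0"] by simp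

lemma Lp_zero: "Lp h v 0 = 0"
proof -
  have "inf 0 (s *\<^sub>R v) = 0" if "0 \<le> s" for s
  proof -
    have "0 \<le> s *\<^sub>R v" using v that by (rule bl_scaleR_nonneg)
    then show ?thesis by (simp add: inf_absorb1)
  qed
  then have "Lp h v 0 = (SUP s\<in>{0::real..}. 0)" unfolding Lp_def
    using bl_zero[OF posf_bl[OF h]] by (intro SUP_cong) auto
  then show ?thesis by simp
qed

lemma Lp_disj: assumes "0 \<le> y" "inf y v = 0" shows "Lp h v y = 0"
proof -
  have "\<And>s. 0 \<le> s \<Longrightarrow> inf y (s *\<^sub>R v) = 0"
    using inf_zero_scale[OF assms(1) v assms(2), of 1] by simp
  then have "Lp h v y = (SUP s\<in>{0::real..}. 0)" unfolding Lp_def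
    using bl_zero[OF posf_bl[OF h]] by (intro SUP_cong) auto
  then show ?thesis by simp
qed

lemma Lp_self_le: assumes "0 \<le> y" "y \<le> v" shows "Lp h v y = h y"
proof -
  have "inf y (1 *\<^sub>R v) = y" using assms by (simp add: inf_absorb1)
  then have "h y \<le> Lp h v y" using Lp_ge[OF assms(1), of 1] by simp
  then show ?thesis using Lp_le[OF assms(1)] by simp
qed

lemma Lp_add:
  assumes a: "0 \<le> a" and b: "0 \<le> b"
  shows "Lp h v (a + b) = Lp h v a + Lp h v b"
proof (rule antisym)
  have hl: "bounded_linear h" by (rule posf_bl[OF h])
  show "Lp h v (a + b) \<le> Lp h v a + Lp h v b"
    unfolding Lp_def[of h v "a+b"]
  proof (rule cSUP_least)
    show "{0::real..} \<noteq> {}" by simp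
    fix s :: real assume s: "s \<in> {0..}"
    have sv: "0 \<le> s *\<^sub>R v" using s by (intro bl_scaleR_nonneg[OF v]) simp
    have "h (inf (a + b) (s *\<^sub>R v)) \<le> h (inf a (s *\<^sub>R v) + inf b (s *\<^sub>R v))"
      by (rule posf_mono[OF h riesz_ineq[OF a b sv]])
    also have "\<dots> = h (inf a (s *\<^sub>R v)) + h (inf b (s *\<^sub>R v))"
      by (simp add: bl_add[OF hl])
    also have "\<dots> \<le> Lp h v a + Lp h v b"
      using Lp_ge[OF a, of s] Lp_ge[OF b, of s] s by (intro add_mono) auto
    finally show "h (inf (a + b) (s *\<^sub>R v)) \<le> Lp h v a + Lp h v b" .
  qed
  have key: "h (inf a (s *\<^sub>R v)) + h (inf b (t *\<^sub>R v)) \<le> Lp h v (a + b)"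
    if s: "0 \<le> s" and t: "0 \<le> t" for s t
  proof -
    define m where "m = s + t"
    have m: "0 \<le> m" "s \<le> m" "t \<le> m" using s t unfolding m_def by auto
    have "h (inf a (s *\<^sub>R v)) + h (inf b (t *\<^sub>R v)) \<le> h (inf a (m *\<^sub>R v)) + h (inf b (m *\<^sub>R v))"
      using m by (intro add_mono posf_mono[OF h] inf_scale_mono[OF v]) auto
    also have "\<dots> = h (inf a (m *\<^sub>R v) + inf b (m *\<^sub>R v))"
      by (simp add: bl_add[OF hl])
    also have "\<dots> \<le> h (inf (a + b) ((2 * m) *\<^sub>R v))"
    proof (rule posf_mono[OF h], rule le_infI)
      show "inf a (m *\<^sub>R v) + inf b (m *\<^sub>R v) \<le> a + b" by (intro add_mono) auto
      have "inf a (m *\<^sub>R v) + inf b (m *\<^sub>R v) \<le> m *\<^sub>R v + m *\<^sub>R v" by (intro add_mono) auto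
      also have "\<dots> = (2 * m) *\<^sub>R v" by (simp add: scaleR_add_left[symmetric])
      finally show "inf a (m *\<^sub>R v) + inf b (m *\<^sub>R v) \<le> (2 * m) *\<^sub>R v" .
    qed
    also have "\<dots> \<le> Lp h v (a + b)" using m a b by (intro Lp_ge) auto
    finally show ?thesis .
  qed
  have "Lp h v a \<le> Lp h v (a + b) - Lp h v b"
  proof -
    have "\<And>s. s \<in> {0::real..} \<Longrightarrow> h (inf a (s *\<^sub>R v)) \<le> Lp h v (a + b) - Lp h v b"
    proof -
      fix s :: real assume s: "s \<in> {0..}"
      have "Lp h v b \<le> Lp h v (a + b) - h (inf a (s *\<^sub>R v))"
        unfolding Lp_def[of h v b]
      proof (rule cSUP_least)
        show "{0::real..} \<noteq> {}" by simp
        fix t :: real assume "t \<in> {0..}"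
        then show "h (inf b (t *\<^sub>R v)) \<le> Lp h v (a + b) - h (inf a (s *\<^sub>R v))"
          using key[of s t] s by auto
      qed
      then show "h (inf a (s *\<^sub>R v)) \<le> Lp h v (a + b) - Lp h v b" by simp
    qed
    then show ?thesis unfolding Lp_def[of h v a] by (intro cSUP_least) auto
  qed
  then show "Lp h v a + Lp h v b \<le> Lp h v (a + b)" by simp
qed

lemma Lp_scale_le:
  assumes c: "0 < c" and a: "0 \<le> a"
  shows "c * Lp h v a \<le> Lp h v (c *\<^sub>R a)"
proof -
  have hl: "bounded_linear h" by (rule posf_bl[OF h])
  have ca: "0 \<le> c *\<^sub>R a" using c by (intro bl_scaleR_nonneg[OF a]) simp
  have "Lp h v a \<le> Lp h v (c *\<^sub>R a) / c"
    unfolding Lp_def[of h v a]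
  proof (rule cSUP_least)
    show "{0::real..} \<noteq> {}" by simp
    fix s :: real assume s: "s \<in> {0..}"
    have "c * h (inf a (s *\<^sub>R v)) = h (c *\<^sub>R inf a (s *\<^sub>R v))"
      by (simp add: bl_scale[OF hl])
    also have "\<dots> = h (inf (c *\<^sub>R a) ((c * s) *\<^sub>R v))"
      using c by (simp add: scaleR_inf_bl)
    also have "\<dots> \<le> Lp h v (c *\<^sub>R a)" using s c by (intro Lp_ge[OF ca]) auto
    finally show "h (inf a (s *\<^sub>R v)) \<le> Lp h v (c *\<^sub>R a) / c"
      using c by (simp add: field_simps)
  qed
  then show ?thesis using c by (simp add: field_simps)
qed

lemma Lp_scale:
  assumes c: "0 \<le> c" and a: "0 \<le> a"
  shows "Lp h v (c *\<^sub>R a) = c * Lp h v a"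
proof (cases "c = 0")
  case True then show ?thesis by (simp add: Lp_zero)
next
  case False
  then have c: "0 < c" using c by simp
  have ca: "0 \<le> c *\<^sub>R a" using c by (intro bl_scaleR_nonneg[OF a]) simp
  have "(1/c) * Lp h v (c *\<^sub>R a) \<le> Lp h v ((1/c) *\<^sub>R (c *\<^sub>R a))"
    using c by (intro Lp_scale_le[OF _ ca]) auto
  then have "Lp h v (c *\<^sub>R a) \<le> c * Lp h v a" using c by (simp add: field_simps)
  then show ?thesis using Lp_scale_le[OF c a] by simp
qed

lemma BP_diff:
  assumes a: "0 \<le> a" and b: "0 \<le> b"
  shows "BP h v (a - b) = Lp h v a - Lp h v b"
proof -
  define y where "y = a - b"
  have "pprt y + b = a + (- nprt y)" using prts_diff[of y] unfolding y_def
    by (metis add.commute diff_add_cancel diff_diff_eq2 diff_eq_eq)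
  then have "Lp h v (pprt y) + Lp h v b = Lp h v a + Lp h v (- nprt y)"
    using Lp_add a b by (metis neg_part_nonneg pos_part_nonneg)
  then show ?thesis unfolding BP_def y_def[symmetric] by simp
qed

lemma BP_pos: "0 \<le> y \<Longrightarrow> BP h v y = Lp h v y"
  unfolding BP_def by (simp add: Lp_zero)

lemma BP_add: "BP h v (y + z) = BP h v y + BP h v z"
proof -
  have e: "(pprt y + pprt z) - (- nprt y + - nprt z) = (pprt y + nprt y) + (pprt z + nprt z)"
    by (simp add: algebra_simps)
  have "y + z = (pprt y + pprt z) - (- nprt y + - nprt z)"
    unfolding e by (simp flip: prts)
  then have "BP h v (y + z) = Lp h v (pprt y + pprt z) - Lp h v (- nprt y + - nprt z)"
    using BP_diff by (metis add_nonneg_nonneg neg_part_nonneg pos_part_nonneg)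
  moreover have "Lp h v (- nprt y + - nprt z) = Lp h v (- nprt y) + Lp h v (- nprt z)"
    by (rule Lp_add) simp_all
  moreover have "Lp h v (pprt y + pprt z) = Lp h v (pprt y) + Lp h v (pprt z)"
    by (rule Lp_add) simp_all
  ultimately show ?thesis unfolding BP_def[of h v y] BP_def[of h v z] by linarith
qed

lemma BP_scale: "BP h v (c *\<^sub>R y) = c * BP h v y"
proof (cases "0 \<le> c")
  case True
  have "c *\<^sub>R y = c *\<^sub>R pprt y - c *\<^sub>R (- nprt y)"
    using prts_diff[of y] by (metis scaleR_diff_right)
  then have "BP h v (c *\<^sub>R y) = Lp h v (c *\<^sub>R pprt y) - Lp h v (c *\<^sub>R (- nprt y))"
    using BP_diff bl_scaleR_nonneg[OF pos_part_nonneg True] bl_scaleR_nonneg[OF neg_part_nonneg True] by metis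
  moreover have "Lp h v (c *\<^sub>R pprt y) = c * Lp h v (pprt y)" by (rule Lp_scale[OF True]) simp
  moreover have "Lp h v (c *\<^sub>R (- nprt y)) = c * Lp h v (- nprt y)" by (rule Lp_scale[OF True]) simp
  ultimately show ?thesis unfolding BP_def[of h v y] right_diff_distrib by linarith
next
  case False
  then have nc: "0 \<le> - c" by simp
  have "c *\<^sub>R y = (- c) *\<^sub>R (- nprt y) - (- c) *\<^sub>R pprt y"
    using prts_diff[of y] by (metis minus_diff_eq scaleR_diff_right scaleR_minus_left scaleR_minus_right)
  then have "BP h v (c *\<^sub>R y) = Lp h v ((- c) *\<^sub>R (- nprt y)) - Lp h v ((- c) *\<^sub>R pprt y)"
    using BP_diff bl_scaleR_nonneg[OF pos_part_nonneg nc] bl_scaleR_nonneg[OF neg_part_nonneg nc] by metis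
  moreover have "Lp h v ((- c) *\<^sub>R pprt y) = (- c) * Lp h v (pprt y)" by (rule Lp_scale[OF nc]) simp
  moreover have "Lp h v ((- c) *\<^sub>R (- nprt y)) = (- c) * Lp h v (- nprt y)" by (rule Lp_scale[OF nc]) simp
  ultimately show ?thesis unfolding BP_def[of h v y] right_diff_distrib by linarith
qed

lemma BP_bounded_linear: "bounded_linear (BP h v)"
proof -
  obtain K where K: "\<And>x. norm (h x) \<le> norm x * K"
    using bounded_linear.bounded[OF posf_bl[OF h]] by blast
  have hl: "bounded_linear h" by (rule posf_bl[OF h])
  show ?thesis
  proof (rule bounded_linear_intro[where K = K])
    show "BP h v (x + y) = BP h v x + BP h v y" for x y by (rule BP_add)
    show "BP h v (r *\<^sub>R x) = r *\<^sub>R BP h v x" for r x by (simp add: BP_scale)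
    fix x
    have "\<bar>BP h v x\<bar> \<le> Lp h v (pprt x) + Lp h v (- nprt x)"
      unfolding BP_def using Lp_nonneg[of "pprt x"] Lp_nonneg[of "- nprt x"] by simp
    also have "\<dots> \<le> h (pprt x) + h (- nprt x)"
      by (intro add_mono Lp_le) auto
    also have "\<dots> = h (lat_abs x)"
      by (simp add: lat_abs_prts bl_add[OF hl, symmetric])
    also have "\<dots> \<le> norm (lat_abs x) * K" using K[of "lat_abs x"] by simp
    also have "\<dots> = norm x * K" by (simp add: norm_lat_abs)
    finally show "norm (BP h v x) \<le> norm x * K" by simp
  qed
qed

lemma BP_posf: "posf (BP h v)"
  unfolding posf_def using BP_bounded_linear BP_pos Lp_nonneg by simp

end


lemma posf_le_abs:
  assumes f: "posf f" and z: "lat_abs z \<le> y" shows "f z \<le> f y"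
proof -
  have fl: "bounded_linear f" by (rule posf_bl[OF f])
  have "f z = f (pprt z) - f (- nprt z)"
    using bl_diff[OF fl, of "pprt z" "- nprt z"] prts_diff[of z] by simp
  also have "\<dots> \<le> f (pprt z)" using posf_nonneg[OF f neg_part_nonneg[of z]] by simp
  also have "\<dots> \<le> f (lat_abs z)" by (rule posf_mono[OF f pprt_le_abs])
  also have "\<dots> \<le> f y" by (rule posf_mono[OF f z])
  finally show ?thesis .
qed

lemma dual_abs_pos:
  assumes f: "posf f" and y: "0 \<le> y" shows "dual_abs f y = f y"
  unfolding dual_abs_def
proof (rule cSup_eq_maximum)
  show "f y \<in> f ` {z. lat_abs z \<le> y}" using lat_abs_id[OF y] by auto
  show "\<And>w. w \<in> f ` {z. lat_abs z \<le> y} \<Longrightarrow> w \<le> f y" using posf_le_abs[OF f] by auto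
qed

lemma BP_dual_disjoint:
  fixes v1 v2 :: "'a::banach_lattice"
  assumes h1: "posf h1" and h2: "posf h2" and v1: "0 \<le> v1" and v2: "0 \<le> v2"
    and d: "inf v1 v2 = 0"
  shows "dual_disjoint (BP h1 v1) (BP h2 v2)"
  unfolding dual_disjoint_def
proof (intro allI impI)
  fix x :: 'a assume x: "0 \<le> x"
  define S where "S = {y. 0 \<le> y \<and> y \<le> x}"
  define f where "f = BP h1 v1"
  define g where "g = BP h2 v2"
  have f: "posf f" unfolding f_def by (rule BP_posf[OF h1 v1])
  have g: "posf g" unfolding g_def by (rule BP_posf[OF h2 v2])
  have gl: "bounded_linear g" by (rule posf_bl[OF g])
  have eq: "(INF y\<in>S. dual_abs f y + dual_abs g (x - y)) = (INF y\<in>S. f y + g (x - y))"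
    by (rule INF_cong) (auto simp: S_def dual_abs_pos[OF f] dual_abs_pos[OF g])
  have nn: "\<And>y. y \<in> S \<Longrightarrow> 0 \<le> f y + g (x - y)"
    unfolding S_def using posf_nonneg[OF f] posf_nonneg[OF g] by (simp add: add_nonneg_nonneg)
  have bdd: "bdd_below ((\<lambda>y. f y + g (x - y)) ` S)"
    by (rule bdd_belowI[where m = 0]) (use nn in auto)
  have S0: "0 \<in> S" unfolding S_def using x by simp
  have ge: "0 \<le> (INF y\<in>S. f y + g (x - y))"
    by (rule cINF_greatest) (use S0 nn in auto)
  have le: "(INF y\<in>S. f y + g (x - y)) \<le> 0"
  proof (rule field_le_epsilon)
    fix e :: real assume e: "0 < e"
    have "Lp h2 v2 x - e < Lp h2 v2 x" using e by simp
    then obtain s where s: "s \<in> {0..}" and sl: "Lp h2 v2 x - e < h2 (inf x (s *\<^sub>R v2))"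
      unfolding Lp_def[of h2 v2 x]
      using less_cSUP_iff[OF _ Lp_bdd[OF h2 v2 x]] by auto
    define y where "y = inf x (s *\<^sub>R v2)"
    have y0: "0 \<le> y" unfolding y_def using x v2 s by (intro inf_scale_nonneg) auto
    have yx: "y \<le> x" unfolding y_def by simp
    have ysv: "y \<le> s *\<^sub>R v2" unfolding y_def by simp
    have "inf (s *\<^sub>R v2) (1 *\<^sub>R v1) = 0"
      using s by (intro inf_zero_scale[OF v2 v1]) (auto simp: inf_commute d)
    then have "inf y v1 = 0" using inf_zero_mono[OF y0 ysv v1 order_refl[of v1]] by simp
    then have fy: "f y = 0" unfolding f_def using BP_pos[OF h1 v1 y0] Lp_disj[OF h1 v1 y0] by simp
    have "g (x - y) = g x - g y" by (rule bl_diff[OF gl])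
    also have "\<dots> = Lp h2 v2 x - Lp h2 v2 y" unfolding g_def
      using BP_pos[OF h2 v2 x] BP_pos[OF h2 v2 y0] by simp
    also have "\<dots> \<le> Lp h2 v2 x - h2 y"
    proof -
      have "inf y (s *\<^sub>R v2) = y" using ysv by (simp add: inf_absorb1)
      then have "h2 y \<le> Lp h2 v2 y" using Lp_ge[OF h2 v2 y0, of s] s by simp
      then show ?thesis by simp
    qed
    also have "\<dots> < e" using sl unfolding y_def by simp
    finally have "f y + g (x - y) < e" using fy by simp
    moreover have "y \<in> S" unfolding S_def using y0 yx by simp
    ultimately have "(INF y\<in>S. f y + g (x - y)) \<le> f y + g (x - y)"
      using cINF_lower[OF bdd] by blast
    then show "(INF y\<in>S. f y + g (x - y)) \<le> 0 + e"
      using \<open>f y + g (x - y) < e\<close> by simp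
  qed
  show "(INF y\<in>{y. 0 \<le> y \<and> y \<le> x}. dual_abs (BP h1 v1) y + dual_abs (BP h2 v2) (x - y)) = 0"
    using eq ge le unfolding S_def f_def g_def by simp
qed

lemma Lp_tendsto_from_BP:
  assumes "\<And>n. posf (h n)" "\<And>n. 0 \<le> v n"
    and "\<And>y. 0 \<le> y \<Longrightarrow> (\<lambda>n. Lp (h n) (v n) y) \<longlonglongrightarrow> 0"
  shows "weak_star_null (\<lambda>n. BP (h n) (v n))"
  unfolding weak_star_null_def
proof
  fix y :: 'a
  have "(\<lambda>n. Lp (h n) (v n) (pprt y) - Lp (h n) (v n) (- nprt y)) \<longlonglongrightarrow> 0 - 0"
    using assms(3) by (intro tendsto_diff) auto
  then show "(\<lambda>n. BP (h n) (v n) y) \<longlonglongrightarrow> 0" unfolding BP_def by simp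
qed

lemma wsn_A:
  assumes h: "\<And>n. posf (h n)" and v: "\<And>n. 0 \<le> v n"
    and t: "\<And>y. 0 \<le> y \<Longrightarrow> (\<lambda>n. h n y) \<longlonglongrightarrow> 0"
  shows "weak_star_null (\<lambda>n. BP (h n) (v n))"
proof (rule Lp_tendsto_from_BP[OF h v])
  fix y :: 'a assume y: "0 \<le> y"
  show "(\<lambda>n. Lp (h n) (v n) y) \<longlonglongrightarrow> 0"
  proof (rule real_tendsto_sandwich[where f = "\<lambda>n. 0" and h = "\<lambda>n. h n y"])
    show "\<forall>\<^sub>F n in sequentially. 0 \<le> Lp (h n) (v n) y" using Lp_nonneg[OF h v y] by simp
    show "\<forall>\<^sub>F n in sequentially. Lp (h n) (v n) y \<le> h n y" using Lp_le[OF h v y] by simp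
    show "(\<lambda>n. 0::real) \<longlonglongrightarrow> 0" by simp
    show "(\<lambda>n. h n y) \<longlonglongrightarrow> 0" using t[OF y] .
  qed
qed

lemma Lp_sum_le:
  fixes N :: nat and y :: "'a::banach_lattice"
  assumes h: "posf h" and v: "\<And>n. 0 \<le> v n"
    and d: "\<And>n m. n \<noteq> m \<Longrightarrow> inf (v n) (v m) = 0"
  shows "0 \<le> y \<Longrightarrow> (\<Sum>n<N. Lp h (v n) y) \<le> h y"
proof (induction N arbitrary: y)
  case 0 then show ?case using posf_nonneg[OF h] by simp
next
  case (Suc N)
  have hl: "bounded_linear h" by (rule posf_bl[OF h])
  note y = Suc.prems
  show ?case
  proof (rule field_le_epsilon)
    fix e :: real assume e: "0 < e"
    have "Lp h (v N) y - e < Lp h (v N) y" using e by simp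
    then obtain s where s: "s \<in> {0..}" and sl: "Lp h (v N) y - e < h (inf y (s *\<^sub>R v N))"
      unfolding Lp_def[of h "v N" y]
      using less_cSUP_iff[OF _ Lp_bdd[OF h v y]] by auto
    define z where "z = inf y (s *\<^sub>R v N)"
    define w where "w = y - z"
    have z0: "0 \<le> z" unfolding z_def using y v s by (intro inf_scale_nonneg) auto
    have "z \<le> y" unfolding z_def by simp
    then have w0: "0 \<le> w" unfolding w_def by simp
    have zsv: "z \<le> s *\<^sub>R v N" unfolding z_def by simp
    have yzw: "y = z + w" unfolding w_def by simp
    have "Lp h (v n) y = Lp h (v n) w" if n: "n < N" for n
    proof -
      have "inf (s *\<^sub>R v N) (1 *\<^sub>R v n) = 0"
        using s n by (intro inf_zero_scale[OF v v]) (auto simp: d)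
      then have "inf z (v n) = 0" using inf_zero_mono[OF z0 zsv v order_refl] by simp
      then have "Lp h (v n) z = 0" by (rule Lp_disj[OF h v z0])
      then show ?thesis using Lp_add[OF h v z0 w0] yzw by simp
    qed
    then have "(\<Sum>n<N. Lp h (v n) y) = (\<Sum>n<N. Lp h (v n) w)" by simp
    also have "\<dots> \<le> h w" by (rule Suc.IH[OF w0])
    also have "\<dots> = h y - h z" unfolding w_def by (rule bl_diff[OF hl])
    finally have "(\<Sum>n<Suc N. Lp h (v n) y) \<le> h y - h z + Lp h (v N) y" by simp
    also have "\<dots> < h y + e" using sl unfolding z_def by simp
    finally show "(\<Sum>n<Suc N. Lp h (v n) y) \<le> h y + e" by simp
  qed
qed

lemma wsn_B:
  assumes h: "posf h" and v: "\<And>n. 0 \<le> v n"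
    and d: "\<And>n m. n \<noteq> m \<Longrightarrow> inf (v n) (v m) = 0"
  shows "weak_star_null (\<lambda>n. BP h (v n))"
proof (rule Lp_tendsto_from_BP[OF h v])
  fix y :: 'a assume y: "0 \<le> y"
  have "summable (\<lambda>n. Lp h (v n) y)"
    by (rule summableI_nonneg_bounded[where x = "h y"])
      (use Lp_nonneg[OF h v y] Lp_sum_le[OF h v d y] in auto)
  then show "(\<lambda>n. Lp h (v n) y) \<longlonglongrightarrow> 0" by (rule summable_LIMSEQ_zero)
qed


lemma sym_lin:
  assumes "sym_kform k A" "length xs = k" "i < k"
  shows "linear (\<lambda>y. A (xs[i := y]))"
  using assms unfolding sym_kform_def by blast

lemma A_upd_diff:
  assumes "sym_kform k A" "length xs = k" "i < k"
  shows "A (xs[i := a - b]) = A (xs[i := a]) - A (xs[i := b])"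
  using linear_diff[OF sym_lin[OF assms]] by simp

lemma A_upd_add:
  assumes "sym_kform k A" "length xs = k" "i < k"
  shows "A (xs[i := a + b]) = A (xs[i := a]) + A (xs[i := b])"
  using linear_add[OF sym_lin[OF assms]] by simp

lemma A_upd_scale:
  assumes "sym_kform k A" "length xs = k" "i < k"
  shows "A (xs[i := c *\<^sub>R a]) = c * A (xs[i := a])"
  using linear_scale[OF sym_lin[OF assms]] by simp

lemma kform_pos:
  assumes "positive_kform k A" "length ys = k" "\<And>i. i < k \<Longrightarrow> 0 \<le> ys ! i"
  shows "0 \<le> A ys"
proof -
  have "\<forall>x\<in>set ys. 0 \<le> x" using assms(2,3) by (auto simp: in_set_conv_nth)
  then show ?thesis using assms(1,2) unfolding positive_kform_def by blast
qed

lemma kform_abs_bound: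
  fixes A :: "'a::banach_lattice list \<Rightarrow> real"
  assumes P: "positive_kform k A" and lx: "length xs = k" and ly: "length ys = k"
    and le: "\<And>i. i < k \<Longrightarrow> lat_abs (xs ! i) \<le> ys ! i"
  shows "\<bar>A xs\<bar> \<le> A ys"
proof -
  have S: "\<forall>xs ys. length xs = k \<longrightarrow> length ys = k \<longrightarrow> (\<forall>i<k. lat_abs (xs!i) \<le> ys!i) \<longrightarrow>
      (\<forall>i<k. m \<le> i \<longrightarrow> xs!i = ys!i) \<longrightarrow> \<bar>A xs\<bar> \<le> A ys" for m
  proof (induction m)
    case 0
    show ?case
    proof (intro allI impI)
      fix xs ys :: "'a list"
      assume l1: "length xs = k" and l2: "length ys = k" and le: "\<forall>i<k. lat_abs (xs!i) \<le> ys!i"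
        and eq: "\<forall>i<k. 0 \<le> i \<longrightarrow> xs!i = ys!i"
      have "xs = ys" using l1 l2 eq by (intro nth_equalityI) auto
      moreover have "0 \<le> A ys"
        using l2 le by (intro kform_pos[OF P]) (auto intro: order_trans[OF lat_abs_nonneg])
      ultimately show "\<bar>A xs\<bar> \<le> A ys" by simp
    qed
  next
    case (Suc m)
    show ?case
    proof (intro allI impI)
      fix xs ys :: "'a list"
      assume l1: "length xs = k" and l2: "length ys = k" and le: "\<forall>i<k. lat_abs (xs!i) \<le> ys!i"
        and eq: "\<forall>i<k. Suc m \<le> i \<longrightarrow> xs!i = ys!i"
      show "\<bar>A xs\<bar> \<le> A ys"
      proof (cases "m < k")
        case False
        then have "\<forall>i<k. m \<le> i \<longrightarrow> xs!i = ys!i" by auto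
        then show ?thesis using Suc.IH l1 l2 le by blast
      next
        case True
        have sk: "sym_kform k A" using P unfolding positive_kform_def by simp
        define a where "a = xs ! m"
        define b where "b = ys ! m"
        have ab: "lat_abs a \<le> b" unfolding a_def b_def using le True by simp
        have ys0: "\<And>i. i < k \<Longrightarrow> 0 \<le> ys ! i" using le by (auto intro: order_trans[OF lat_abs_nonneg])
        have IH1: "\<bar>A (xs[m := c])\<bar> \<le> A (ys[m := c])" if c: "0 \<le> c" for c
        proof -
          have "\<forall>i<k. lat_abs ((xs[m := c])!i) \<le> (ys[m := c])!i"
          proof (intro allI impI)
            fix i assume i: "i < k"
            show "lat_abs ((xs[m := c])!i) \<le> (ys[m := c])!i"
            proof (cases "i = m")
              case True then show ?thesis using i l1 l2 lat_abs_id[OF c] by simp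
            next
              case False then show ?thesis using i le by simp
            qed
          qed
          moreover have "\<forall>i<k. m \<le> i \<longrightarrow> (xs[m := c])!i = (ys[m := c])!i"
            using eq l1 l2 by (auto simp: nth_list_update)
          ultimately show ?thesis using Suc.IH l1 l2 by simp
        qed
        have "A xs = A (xs[m := pprt a - (- nprt a)])"
          using prts_diff[of a] unfolding a_def by simp
        also have "\<dots> = A (xs[m := pprt a]) - A (xs[m := - nprt a])"
          by (rule A_upd_diff[OF sk l1 True])
        finally have "\<bar>A xs\<bar> \<le> \<bar>A (xs[m := pprt a])\<bar> + \<bar>A (xs[m := - nprt a])\<bar>" by simp
        also have "\<dots> \<le> A (ys[m := pprt a]) + A (ys[m := - nprt a])"
          using IH1[of "pprt a"] IH1[of "- nprt a"] by simp
        also have "\<dots> = A (ys[m := lat_abs a])"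
          using A_upd_add[OF sk l2 True, of "pprt a" "- nprt a"] by (simp add: lat_abs_prts)
        also have "\<dots> \<le> A ys"
        proof -
          have "0 \<le> A (ys[m := b - lat_abs a])"
          proof (rule kform_pos[OF P])
            show "length (ys[m := b - lat_abs a]) = k" using l2 by simp
            fix i assume i: "i < k"
            show "0 \<le> ys[m := b - lat_abs a] ! i"
            proof (cases "i = m")
              case True then show ?thesis using i l2 ab by simp
            next
              case False then show ?thesis using i ys0 by simp
            qed
          qed
          also have "\<dots> = A (ys[m := b]) - A (ys[m := lat_abs a])"
            by (rule A_upd_diff[OF sk l2 True])
          also have "ys[m := b] = ys" unfolding b_def by simp
          finally show ?thesis by simp
        qed
        finally show ?thesis .
      qed
    qed
  qed
  show ?thesis using S[of k] lx ly le by auto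
qed

lemma kform_last:
  assumes P: "positive_kform (Suc k) A" and y: "0 \<le> y"
  shows "positive_kform k (\<lambda>zs. A (zs @ [y]))"
proof -
  have sk: "sym_kform (Suc k) A" using P unfolding positive_kform_def by simp
  obtain C where C: "\<And>xs. length xs = Suc k \<Longrightarrow> \<bar>A xs\<bar> \<le> C * prod_list (map norm xs)"
    using sk unfolding sym_kform_def by blast
  have lin: "linear (\<lambda>z. A ((xs @ [y])[i := z]))" if "length xs = k" "i < k" for xs i
    using sym_lin[OF sk, of "xs @ [y]" i] that by simp
  have "sym_kform k (\<lambda>zs. A (zs @ [y]))"
    unfolding sym_kform_def
  proof (intro conjI allI impI)
    fix xs :: "'a list" and i assume "length xs = k" "i < k"
    then show "linear (\<lambda>z. A ((xs[i := z]) @ [y]))"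
      using lin[of xs i] by (simp add: list_update_append1)
  next
    show "\<exists>C. \<forall>xs. length xs = k \<longrightarrow> \<bar>A (xs @ [y])\<bar> \<le> C * prod_list (map norm xs)"
    proof (intro exI allI impI)
      fix xs :: "'a list" assume "length xs = k"
      then have "length (xs @ [y]) = Suc k" by simp
      then have "\<bar>A (xs @ [y])\<bar> \<le> C * prod_list (map norm (xs @ [y]))" by (rule C)
      then show "\<bar>A (xs @ [y])\<bar> \<le> (C * norm y) * prod_list (map norm xs)" by (simp add: ac_simps)
    qed
  next
    fix xs ys :: "'a list" assume "length xs = k" "mset ys = mset xs"
    then show "A (ys @ [y]) = A (xs @ [y])"
      using sk unfolding sym_kform_def by (metis length_append_singleton mset_append)
  qed
  moreover have "\<forall>xs. length xs = k \<longrightarrow> (\<forall>x\<in>set xs. 0 \<le> x) \<longrightarrow> 0 \<le> A (xs @ [y])"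
    using P y unfolding positive_kform_def by auto
  ultimately show ?thesis unfolding positive_kform_def by simp
qed

lemma kform_posf:
  fixes A :: "'a::banach_lattice list \<Rightarrow> real"
  assumes P: "positive_kform (Suc k) A" and u: "0 \<le> u"
  shows "posf (\<lambda>y. A (replicate k u @ [y]))"
proof -
  have sk: "sym_kform (Suc k) A" using P unfolding positive_kform_def by simp
  obtain C where C: "\<And>xs. length xs = Suc k \<Longrightarrow> \<bar>A xs\<bar> \<le> C * prod_list (map norm xs)"
    using sk unfolding sym_kform_def by blast
  define w where "w = replicate k u @ [0]"
  have e: "replicate k u @ [y] = w[k := y]" for y
    unfolding w_def by (simp add: list_update_append)
  have l: "length w = Suc k" unfolding w_def by simp
  have bl: "bounded_linear (\<lambda>y. A (replicate k u @ [y]))"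
  proof (rule bounded_linear_intro[where K = "C * norm u ^ k"])
    show "A (replicate k u @ [x + y]) = A (replicate k u @ [x]) + A (replicate k u @ [y])" for x y
      unfolding e by (rule A_upd_add[OF sk l]) simp
    show "A (replicate k u @ [r *\<^sub>R x]) = r *\<^sub>R A (replicate k u @ [x])" for r x
      unfolding e using A_upd_scale[OF sk l, of k r x] by simp
    show "norm (A (replicate k u @ [x])) \<le> norm x * (C * norm u ^ k)" for x
      using C[of "replicate k u @ [x]"] by (simp add: prod_list_replicate ac_simps)
  qed
  have "0 \<le> A (replicate k u @ [y])" if "0 \<le> y" for y
    using P u that unfolding positive_kform_def by auto
  then show ?thesis unfolding posf_def using bl by simp
qed


context
  fixes x :: "nat \<Rightarrow> 'a::banach_lattice"
  assumes disj: "disjoint_seq x" and al: "almost_limited (range x)"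
begin

lemma disj_p: "n \<noteq> m \<Longrightarrow> inf (pprt (x n)) (pprt (x m)) = 0"
  using disj unfolding disjoint_seq_def
  by (intro inf_zero_mono[OF _ pprt_le_abs _ pprt_le_abs]) auto

lemma disj_q: "n \<noteq> m \<Longrightarrow> inf (- nprt (x n)) (- nprt (x m)) = 0"
  using disj unfolding disjoint_seq_def
  by (intro inf_zero_mono[OF _ nprt_le_abs _ nprt_le_abs]) auto

lemma AL_use:
  assumes f: "\<And>n. posf (f n)" and dd: "dual_disjoint_seq f" and w: "weak_star_null f"
  shows "(\<lambda>n. f n (x n)) \<longlonglongrightarrow> 0"
proof -
  have H: "\<forall>e>0. \<forall>\<^sub>F n in sequentially. \<forall>b\<in>range x. \<bar>f n b\<bar> < e"
    using al f dd w posf_bl unfolding almost_limited_def by blast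
  show ?thesis unfolding tendsto_iff dist_real_def
  proof (intro allI impI)
    fix e :: real assume "0 < e"
    then have "\<forall>\<^sub>F n in sequentially. \<forall>b\<in>range x. \<bar>f n b\<bar> < e" using H by blast
    then show "\<forall>\<^sub>F n in sequentially. \<bar>f n (x n) - 0\<bar> < e" by (rule eventually_mono) auto
  qed
qed

lemma BP_at_p: assumes h: "posf h" shows "BP h (pprt (x n)) (x n) = h (pprt (x n))"
proof -
  have v: "0 \<le> pprt (x n)" by simp
  have "Lp h (pprt (x n)) (pprt (x n)) = h (pprt (x n))" by (rule Lp_self_le[OF h v v]) simp
  moreover have "Lp h (pprt (x n)) (- nprt (x n)) = 0"
    by (rule Lp_disj[OF h v]) (simp_all add: prts_disj inf_commute)
  ultimately show ?thesis unfolding BP_def by simp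
qed

lemma BP_at_q: assumes h: "posf h" shows "BP h (- nprt (x n)) (x n) = - h (- nprt (x n))"
proof -
  have v: "0 \<le> - nprt (x n)" by simp
  have "Lp h (- nprt (x n)) (- nprt (x n)) = h (- nprt (x n))" by (rule Lp_self_le[OF h v v]) simp
  moreover have "Lp h (- nprt (x n)) (pprt (x n)) = 0"
    by (rule Lp_disj[OF h v]) (simp_all add: prts_disj)
  ultimately show ?thesis unfolding BP_def by simp
qed

lemma key:
  assumes h: "\<And>n. posf (h n)"
    and wp: "weak_star_null (\<lambda>n. BP (h n) (pprt (x n)))"
    and wq: "weak_star_null (\<lambda>n. BP (h n) (- nprt (x n)))"
  shows "(\<lambda>n. h n (lat_abs (x n))) \<longlonglongrightarrow> 0"
proof -
  have p: "(\<lambda>n. BP (h n) (pprt (x n)) (x n)) \<longlonglongrightarrow> 0"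
  proof (rule AL_use[where f = "\<lambda>n. BP (h n) (pprt (x n))"])
    show "posf (BP (h n) (pprt (x n)))" for n by (rule BP_posf[OF h]) simp
    show "dual_disjoint_seq (\<lambda>n. BP (h n) (pprt (x n)))"
      unfolding dual_disjoint_seq_def using disj_p h by (auto intro: BP_dual_disjoint)
  qed (rule wp)
  have q: "(\<lambda>n. BP (h n) (- nprt (x n)) (x n)) \<longlonglongrightarrow> 0"
  proof (rule AL_use[where f = "\<lambda>n. BP (h n) (- nprt (x n))"])
    show "posf (BP (h n) (- nprt (x n)))" for n by (rule BP_posf[OF h]) simp
    show "dual_disjoint_seq (\<lambda>n. BP (h n) (- nprt (x n)))"
      unfolding dual_disjoint_seq_def using disj_q h by (auto intro: BP_dual_disjoint)
  qed (rule wq)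
  have p': "(\<lambda>n. h n (pprt (x n))) \<longlonglongrightarrow> 0" using p BP_at_p[OF h] by simp
  have q': "(\<lambda>n. - h n (- nprt (x n))) \<longlonglongrightarrow> 0" using q BP_at_q[OF h] by simp
  then have q'': "(\<lambda>n. h n (- nprt (x n))) \<longlonglongrightarrow> 0" using tendsto_minus[OF q'] by simp
  have "h n (lat_abs (x n)) = h n (pprt (x n)) + h n (- nprt (x n))" for n
    using bl_add[OF posf_bl[OF h[of n]], of "pprt (x n)" "- nprt (x n)"] by (simp add: lat_abs_prts)
  then show ?thesis using tendsto_add[OF p' q''] by simp
qed

lemma claim: "positive_kform (Suc k) A \<Longrightarrow> (\<lambda>n. A (replicate (Suc k) (lat_abs (x n)))) \<longlonglongrightarrow> 0"
proof (induction k arbitrary: A)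
  case 0
  have h: "posf (\<lambda>y. A (replicate 0 (0::'a) @ [y]))" by (rule kform_posf[OF 0]) simp
  have "(\<lambda>n. A (replicate 0 (0::'a) @ [lat_abs (x n)])) \<longlonglongrightarrow> 0"
  proof (rule key[where h = "\<lambda>n y. A (replicate 0 (0::'a) @ [y])"])
    show "posf (\<lambda>y. A (replicate 0 (0::'a) @ [y]))" for n by (rule h)
    show "weak_star_null (\<lambda>n. BP (\<lambda>y. A (replicate 0 0 @ [y])) (pprt (x n)))"
      by (rule wsn_B[OF h]) (simp_all add: disj_p)
    show "weak_star_null (\<lambda>n. BP (\<lambda>y. A (replicate 0 0 @ [y])) (- nprt (x n)))"
      by (rule wsn_B[OF h]) (simp_all add: disj_q)
  qed
  then show ?case by simp
next
  case (Suc k)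
  define h where "h n y = A (replicate (Suc k) (lat_abs (x n)) @ [y])" for n y
  have h: "posf (h n)" for n unfolding h_def by (rule kform_posf[OF Suc.prems lat_abs_nonneg])
  have t: "(\<lambda>n. h n y) \<longlonglongrightarrow> 0" if y: "0 \<le> y" for y
    using Suc.IH[OF kform_last[OF Suc.prems y]] unfolding h_def by simp
  have "(\<lambda>n. h n (lat_abs (x n))) \<longlonglongrightarrow> 0"
  proof (rule key[OF h])
    show "weak_star_null (\<lambda>n. BP (h n) (pprt (x n)))" by (rule wsn_A[OF h _ t]) simp
    show "weak_star_null (\<lambda>n. BP (h n) (- nprt (x n)))" by (rule wsn_A[OF h _ t]) simp
  qed
  moreover have "h n (lat_abs (x n)) = A (replicate (Suc (Suc k)) (lat_abs (x n)))" for n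
    unfolding h_def by (metis replicate_Suc replicate_append_same)
  ultimately show ?case by simp
qed

lemma hom_null: "positive_hom_poly Q \<Longrightarrow> (\<lambda>n. Q (x n)) \<longlonglongrightarrow> 0"
proof -
  assume "positive_hom_poly Q"
  then obtain k A where k: "1 \<le> k" and P: "positive_kform k A" and Q: "\<And>y. Q y = A (replicate k y)"
    unfolding positive_hom_poly_def by blast
  obtain k' where k': "k = Suc k'" using k by (cases k) auto
  have c: "(\<lambda>n. A (replicate k (lat_abs (x n)))) \<longlonglongrightarrow> 0" using claim P k' by simp
  have b: "norm (Q (x n)) \<le> A (replicate k (lat_abs (x n)))" for n
    unfolding Q using kform_abs_bound[OF P, of "replicate k (x n)" "replicate k (lat_abs (x n))"] by simp
  show ?thesis by (rule Lim_null_comparison[OF _ c]) (use b in auto)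
qed

lemma sumlist_null:
  "(\<forall>Q\<in>set Ps. positive_hom_poly Q) \<Longrightarrow> (\<lambda>n. \<Sum>Q\<leftarrow>Ps. Q (x n)) \<longlonglongrightarrow> 0"
proof (induction Ps)
  case Nil then show ?case by simp
next
  case (Cons a Ps)
  then show ?case using tendsto_add[OF hom_null Cons.IH] by simp
qed

lemma pos_null: "positive_poly P \<Longrightarrow> (\<lambda>n. P (x n)) \<longlonglongrightarrow> 0"
  unfolding positive_poly_def using sumlist_null by auto

end

theorem mainTheorem16:
  fixes P :: "'a::banach_lattice \<Rightarrow> real" and x :: "nat \<Rightarrow> 'a"
  assumes "regular_poly P"
    and "disjoint_seq x"
    and "almost_limited (range x)"
    and "weakly_null x"
  shows "(\<lambda>m. P (x m)) \<longlonglongrightarrow> 0"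
proof -
  obtain P1 P2 where P1: "positive_poly P1" and P2: "positive_poly P2" and e: "\<And>y. P y = P1 y - P2 y"
    using assms(1) unfolding regular_poly_def by blast
  have "(\<lambda>m. P1 (x m) - P2 (x m)) \<longlonglongrightarrow> 0 - 0"
    using pos_null[OF assms(2,3) P1] pos_null[OF assms(2,3) P2] by (rule tendsto_diff)
  then show ?thesis using e by simp
qed

end
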